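(* Let $S$ be a commutative $\Gamma$-hemiring, let $\mu$ be a fuzzy h-interior-ideal of $S$ and let $x\in S$. Then $\langle x,\mu\rangle$ is a fuzzy h-interior-ideal of $S$.
   Context: A $\Gamma$-hemiring is a pair of additive commutative semigroups with zero $S$ and $\Gamma$ with a map $S\times\Gamma\times S\to S$, $(a,\alpha,b)\mapsto a\alpha b$, such that for all $a,b,c\in S$, $\alpha,\beta\in\Gamma$: $(a+b)\alpha c=a\alpha c+b\alpha c$; $a\alpha(b+c)=a\alpha b+a\alpha c$; $a(\alpha+\beta)b=a\alpha b+a\beta b$; $a\alpha(b\beta c)=(a\alpha b)\beta c$; $0\alpha a=0=a\alpha0$; $a0b=0=b0a$. It is commutative if $a\alpha b=b\alpha a$ for all $a,b\in S$, $\alpha\in\Gamma$. A fuzzy h-ideal of $S$ is a map $\mu:S\to[0,1]$, not identically $0$, such that for all $x,y,a,b,z\in S$, $\gamma\in\Gamma$: $\mu(x+y)\ge\min\{\mu(x),\mu(y)\}$; $\mu(x\gamma y)\ge\mu(x)$ and $\mu(x\gamma y)\ge\mu(y)$; $x+a+z=b+z$ implies $\mu(x)\ge\min\{\mu(a),\mu(b)\}$. A fuzzy h-interior-ideal is a fuzzy h-ideal $\mu$ with $\mu(x\alpha y\beta z)\ge\mu(y)$ for all $x,y,z\in S$, $\alpha,\beta\in\Gamma$. The extension of $\mu$ by $x$ is $\langle x,\mu\rangle(y)=\inf_{s\in S,\ \alpha,\gamma\in\Gamma}\mu(x\alpha s\gamma y)$. *)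

theory Defs
  imports Complex_Main
begin

definition gamma_hemiring :: "('a::comm_monoid_add \<Rightarrow> 'g::comm_monoid_add \<Rightarrow> 'a \<Rightarrow> 'a) \<Rightarrow> bool" where
  "gamma_hemiring m \<longleftrightarrow>
     (\<forall>a b c \<alpha>. m (a + b) \<alpha> c = m a \<alpha> c + m b \<alpha> c) \<and>
     (\<forall>a b c \<alpha>. m a \<alpha> (b + c) = m a \<alpha> b + m a \<alpha> c) \<and>
     (\<forall>a b \<alpha> \<beta>. m a (\<alpha> + \<beta>) b = m a \<alpha> b + m a \<beta> b) \<and>
     (\<forall>a b c \<alpha> \<beta>. m a \<alpha> (m b \<beta> c) = m (m a \<alpha> b) \<beta> c) \<and>
     (\<forall>a \<alpha>. m 0 \<alpha> a = 0 \<and> m a \<alpha> 0 = 0) \<and>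
     (\<forall>a b. m a 0 b = 0 \<and> m b 0 a = 0)"

definition commutative_gamma_hemiring :: "('a::comm_monoid_add \<Rightarrow> 'g::comm_monoid_add \<Rightarrow> 'a \<Rightarrow> 'a) \<Rightarrow> bool" where
  "commutative_gamma_hemiring m \<longleftrightarrow> gamma_hemiring m \<and> (\<forall>a b \<alpha>. m a \<alpha> b = m b \<alpha> a)"

definition fuzzy_h_ideal :: "('a::comm_monoid_add \<Rightarrow> 'g::comm_monoid_add \<Rightarrow> 'a \<Rightarrow> 'a) \<Rightarrow> ('a \<Rightarrow> real) \<Rightarrow> bool" where
  "fuzzy_h_ideal m \<mu> \<longleftrightarrow>
     (\<forall>x. 0 \<le> \<mu> x \<and> \<mu> x \<le> 1) \<and> (\<exists>x. \<mu> x \<noteq> 0) \<and>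
     (\<forall>x y. \<mu> (x + y) \<ge> min (\<mu> x) (\<mu> y)) \<and>
     (\<forall>x y \<gamma>. \<mu> (m x \<gamma> y) \<ge> \<mu> x \<and> \<mu> (m x \<gamma> y) \<ge> \<mu> y) \<and>
     (\<forall>x a b z. x + a + z = b + z \<longrightarrow> \<mu> x \<ge> min (\<mu> a) (\<mu> b))"

definition fuzzy_h_interior_ideal :: "('a::comm_monoid_add \<Rightarrow> 'g::comm_monoid_add \<Rightarrow> 'a \<Rightarrow> 'a) \<Rightarrow> ('a \<Rightarrow> real) \<Rightarrow> bool" where
  "fuzzy_h_interior_ideal m \<mu> \<longleftrightarrow> fuzzy_h_ideal m \<mu> \<and>
     (\<forall>x y z \<alpha> \<beta>. \<mu> (m (m x \<alpha> y) \<beta> z) \<ge> \<mu> y)"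

definition extension :: "('a::comm_monoid_add \<Rightarrow> 'g::comm_monoid_add \<Rightarrow> 'a \<Rightarrow> 'a) \<Rightarrow> 'a \<Rightarrow> ('a \<Rightarrow> real) \<Rightarrow> 'a \<Rightarrow> real" where
  "extension m x \<mu> y = (INF p \<in> (UNIV :: ('a \<times> 'g \<times> 'g) set).
      \<mu> (m (m x (fst (snd p)) (fst p)) (snd (snd p)) y))"

end

theory Submission
  imports Defs
begin

lemma ext_lower:
  assumes "\<forall>x. 0 \<le> \<mu> x"
  shows "extension m x \<mu> y \<le> \<mu> (m (m x a s) g y)"
proof -
  have "bdd_below ((\<lambda>p. \<mu> (m (m x (fst (snd p)) (fst p)) (snd (snd p)) y)) ` UNIV)"
    using assms by (intro bdd_belowI[where m=0]) auto
  from cINF_lower[OF this, of "(s,a,g)"] show ?thesis by (simp add: extension_def)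
qed

lemma ext_greatest:
  assumes "\<And>a s g. c \<le> \<mu> (m (m x a s) g y)"
  shows "c \<le> extension m x \<mu> y"
  unfolding extension_def
  by (rule cINF_greatest) (auto intro: assms)

lemma ext_upper:
  assumes "\<forall>x. \<mu> x \<le> 1" "\<forall>x. 0 \<le> \<mu> x"
  shows "extension m x \<mu> y \<le> 1"
  using ext_lower[OF assms(2), of m x y 0 0 0] assms(1) by (meson order_trans)

theorem proposition3p9:
  fixes m :: "'a::comm_monoid_add \<Rightarrow> 'g::comm_monoid_add \<Rightarrow> 'a \<Rightarrow> 'a"
    and \<mu> :: "'a \<Rightarrow> real" and x :: 'a
  assumes "commutative_gamma_hemiring m"
    and "fuzzy_h_interior_ideal m \<mu>"
  shows "fuzzy_h_interior_ideal m (extension m x \<mu>)"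
proof -
  let ?E = "extension m x \<mu>"
  have dl: "\<And>a b c \<alpha>. m (a + b) \<alpha> c = m a \<alpha> c + m b \<alpha> c"
   and dr: "\<And>a b c \<alpha>. m a \<alpha> (b + c) = m a \<alpha> b + m a \<alpha> c"
   and as: "\<And>a b c \<alpha> \<beta>. m a \<alpha> (m b \<beta> c) = m (m a \<alpha> b) \<beta> c"
   and z0: "\<And>a b. m a 0 b = 0"
   and cm: "\<And>a b \<alpha>. m a \<alpha> b = m b \<alpha> a"
   and zz: "\<And>a \<alpha>. m a \<alpha> 0 = 0"
    using assms(1) unfolding commutative_gamma_hemiring_def gamma_hemiring_def by meson+
  have b01: "\<forall>x. 0 \<le> \<mu> x \<and> \<mu> x \<le> 1" and nz: "\<exists>x. \<mu> x \<noteq> 0"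
   and ad: "\<And>x y. \<mu> (x + y) \<ge> min (\<mu> x) (\<mu> y)"
   and ml: "\<And>x y \<gamma>. \<mu> (m x \<gamma> y) \<ge> \<mu> x"
   and hc: "\<And>x a b z. x + a + z = b + z \<Longrightarrow> \<mu> x \<ge> min (\<mu> a) (\<mu> b)"
    using assms(2) unfolding fuzzy_h_interior_ideal_def fuzzy_h_ideal_def by meson+
  have pos: "\<forall>x. 0 \<le> \<mu> x" using b01 by auto
  note lo = ext_lower[OF pos]
  have "\<forall>y. 0 \<le> ?E y \<and> ?E y \<le> 1"
    using ext_greatest[of 0 \<mu> m x] ext_upper[of \<mu>] b01 by auto
  moreover have "\<exists>y. ?E y \<noteq> 0"
  proof -
    obtain a where a: "\<mu> a \<noteq> 0" using nz by auto
    have "\<mu> a \<le> \<mu> 0" using ml[of a 0 a] z0 by simp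
    moreover have "?E 0 = \<mu> 0"
      by (simp add: extension_def zz)
    ultimately show ?thesis using a pos by (metis order_antisym)
  qed
  moreover have "\<forall>y z. ?E (y + z) \<ge> min (?E y) (?E z)"
  proof (intro allI)
    fix y z
    show "?E (y + z) \<ge> min (?E y) (?E z)"
    proof (rule ext_greatest)
      fix a s g
      have "min (?E y) (?E z) \<le> min (\<mu> (m (m x a s) g y)) (\<mu> (m (m x a s) g z))"
        using lo[of m x y a s g] lo[of m x z a s g] by (simp add: min.coboundedI1 min.coboundedI2)
      also have "\<dots> \<le> \<mu> (m (m x a s) g (y + z))" using ad by (simp add: dr)
      finally show "min (?E y) (?E z) \<le> \<mu> (m (m x a s) g (y + z))" .
    qed
  qed
  moreover have "\<forall>y z \<gamma>. ?E (m y \<gamma> z) \<ge> ?E y \<and> ?E (m y \<gamma> z) \<ge> ?E z"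
  proof (intro allI conjI)
    fix y z \<gamma>
    have key: "?E (m y \<gamma> z) \<ge> ?E y" for y z
    proof (rule ext_greatest)
      fix a s g
      have "?E y \<le> \<mu> (m (m x a s) g y)" by (rule lo)
      also have "\<dots> \<le> \<mu> (m (m (m x a s) g y) \<gamma> z)" by (rule ml)
      finally show "?E y \<le> \<mu> (m (m x a s) g (m y \<gamma> z))" by (simp add: as)
    qed
    show "?E (m y \<gamma> z) \<ge> ?E y" by (rule key)
    show "?E (m y \<gamma> z) \<ge> ?E z" using key[of z y] cm[of y \<gamma> z] by simp
  qed
  moreover have "\<forall>y a b z. y + a + z = b + z \<longrightarrow> ?E y \<ge> min (?E a) (?E b)"
  proof (intro allI impI)
    fix y a b z :: 'a assume h: "y + a + z = b + z"
    show "?E y \<ge> min (?E a) (?E b)"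
    proof (rule ext_greatest)
      fix \<alpha> s g
      let ?c = "\<lambda>t. m (m x \<alpha> s) g t"
      have "?c y + ?c a + ?c z = ?c b + ?c z" using arg_cong[OF h, of ?c] by (simp add: dr)
      hence "\<mu> (?c y) \<ge> min (\<mu> (?c a)) (\<mu> (?c b))" by (rule hc)
      moreover have "min (?E a) (?E b) \<le> min (\<mu> (?c a)) (\<mu> (?c b))"
        using lo[of m x a \<alpha> s g] lo[of m x b \<alpha> s g] by (simp add: min.coboundedI1 min.coboundedI2)
      ultimately show "min (?E a) (?E b) \<le> \<mu> (?c y)" by linarith
    qed
  qed
  moreover have "\<forall>u y w \<alpha> \<beta>. ?E (m (m u \<alpha> y) \<beta> w) \<ge> ?E y"
  proof (intro allI)
    fix u y w \<alpha> \<beta>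
    show "?E (m (m u \<alpha> y) \<beta> w) \<ge> ?E y"
    proof (rule ext_greatest)
      fix a s g
      have "?E y \<le> \<mu> (m (m x a (m s g u)) \<alpha> y)" by (rule lo)
      also have "\<dots> \<le> \<mu> (m (m (m x a (m s g u)) \<alpha> y) \<beta> w)" by (rule ml)
      finally show "?E y \<le> \<mu> (m (m x a s) g (m (m u \<alpha> y) \<beta> w))" by (simp add: as)
    qed
  qed
  ultimately show ?thesis unfolding fuzzy_h_interior_ideal_def fuzzy_h_ideal_def by blast
qed

end
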